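(* Let $b\in\mathcal E_1$ with $b-1$ flat at $0$, let $\theta$ be the inverse germ of $t\mapsto t\,b(t)$, write $\theta(x)=x\,c(x)$, and let $\sigma(x)=\theta(x)^4$, $\sigma^n$ its $n$-th iterate ($\sigma^0=\mathrm{id}$). Then the product $\Big(\prod_{n=0}^{\infty}c(\sigma^n(x))^{1/4^n}\Big)^{1/2}$ converges uniformly on some neighbourhood of $0$.
   Context: $\mathcal E_1$ denotes the ring of smooth function germs at $0\in\mathbb R$. A germ is flat at $0$ if all its derivatives (including its value) vanish at $0$. *)

theory Defs
  imports "HOL-Analysis.Analysis"
begin

text \<open>A real function represents a germ in E_1 (smooth germ at 0) if it is C-infinity
on some open neighbourhood of 0: every iterated derivative is differentiable there.\<close>
definition smooth_germ :: "(real \<Rightarrow> real) \<Rightarrow> bool" where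
  "smooth_germ f \<longleftrightarrow>
     (\<exists>U. open U \<and> 0 \<in> U \<and> (\<forall>n. \<forall>x\<in>U. (deriv ^^ n) f differentiable (at x)))"

definition flat_at_0 :: "(real \<Rightarrow> real) \<Rightarrow> bool" where
  "flat_at_0 f \<longleftrightarrow> (\<forall>n. (deriv ^^ n) f 0 = 0)"

end

theory Submission
  imports Defs
begin

lemma smooth_germ_isCont0:
  assumes "smooth_germ f" shows "isCont f 0"
proof -
  from assms obtain U where "open U" "0 \<in> U" "\<forall>n. \<forall>x\<in>U. (deriv ^^ n) f differentiable (at x)"
    unfolding smooth_germ_def by blast
  then have "f differentiable (at 0)" by (metis funpow_0)
  then show ?thesis by (simp add: differentiable_imp_continuous_within)
qed

theorem lemma3p9:
  fixes b \<theta> c :: "real \<Rightarrow> real"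
  assumes b_smooth: "smooth_germ b"
    and b_flat: "flat_at_0 (\<lambda>t. b t - 1)"
    and inv1: "\<forall>\<^sub>F t in nhds 0. \<theta> (t * b t) = t"
    and inv2: "\<forall>\<^sub>F x in nhds 0. \<theta> x * b (\<theta> x) = x"
    and c_smooth: "smooth_germ c"
    and theta_c: "\<forall>\<^sub>F x in nhds 0. \<theta> x = x * c x"
  shows "\<exists>U. open U \<and> 0 \<in> U \<and> (\<exists>g.
           uniform_limit U
             (\<lambda>N x. (\<Prod>n<N. c (((\<lambda>y. (\<theta> y) ^ 4) ^^ n) x) powr (1 / 4 ^ n)) powr (1/2))
             g sequentially)"
proof -
  have cc: "isCont c 0" using c_smooth by (rule smooth_germ_isCont0)
  have bc: "isCont b 0" using b_smooth by (rule smooth_germ_isCont0)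
  have b0: "b 0 = 1" using b_flat unfolding flat_at_0_def by (metis funpow_0 eq_iff_diff_eq_0)
  have th0: "\<theta> 0 = 0" using eventually_nhds_x_imp_x[OF theta_c] by simp
  have cn: "(c \<longlongrightarrow> c 0) (nhds 0)" using cc tendsto_at_iff_tendsto_nhds isCont_def by blast
  have "((\<lambda>x. x * c x) \<longlongrightarrow> 0) (nhds 0)"
    using tendsto_mult[OF filterlim_ident cn] by simp
  then have "(\<theta> \<longlongrightarrow> 0) (nhds 0)"
    by (rule Lim_transform_eventually) (use theta_c in \<open>auto elim: eventually_mono\<close>)
  then have "((\<lambda>x. b (\<theta> x)) \<longlongrightarrow> b 0) (nhds 0)"
    using bc isCont_tendsto_compose by blast
  then have L1: "((\<lambda>x. c x * b (\<theta> x)) \<longlongrightarrow> c 0 * 1) (nhds 0)"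
    using tendsto_mult[OF cn, of "\<lambda>x. b (\<theta> x)" 1] b0 by simp
  have L2: "((\<lambda>x. c x * b (\<theta> x)) \<longlongrightarrow> c 0 * 1) (at 0)"
  proof -
    have "at (0::real) \<le> nhds 0" unfolding at_within_def by (rule inf_le1)
    then show ?thesis using L1 tendsto_mono by blast
  qed
  have ev1: "\<forall>\<^sub>F x in at 0. c x * b (\<theta> x) = 1"
  proof -
    have "\<forall>\<^sub>F x in at 0. x \<noteq> 0" by (simp add: eventually_at_filter)
    moreover have "\<forall>\<^sub>F x in at 0. \<theta> x = x * c x \<and> \<theta> x * b (\<theta> x) = x"
      using eventually_conj[OF theta_c inv2] unfolding eventually_at_filter by (auto elim: eventually_mono)
    ultimately show ?thesis
      by eventually_elim (metis mult.assoc mult_cancel_left1)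
  qed
  have "((\<lambda>x. c x * b (\<theta> x)) \<longlongrightarrow> 1) (at 0)"
    by (rule Lim_transform_eventually[OF tendsto_const]) (use ev1 in \<open>auto elim: eventually_mono\<close>)
  then have c0: "c 0 = 1" using L2 tendsto_unique[OF trivial_limit_at] by fastforce
  have "(c \<longlongrightarrow> 1) (nhds 0)" using cn c0 by simp
  then have "\<forall>\<^sub>F x in nhds 0. dist (c x) 1 < 1/2" by (rule tendstoD) simp
  then have "\<forall>\<^sub>F x in nhds 0. \<theta> x = x * c x \<and> dist (c x) 1 < 1/2"
    using theta_c by (simp add: eventually_conj)
  then obtain d where d: "d > 0" "\<And>x. dist x 0 < d \<Longrightarrow> \<theta> x = x * c x \<and> dist (c x) 1 < 1/2"
    unfolding eventually_nhds_metric by blast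
  define \<delta> where "\<delta> = min d (1/2)"
  define U where "U = ball (0::real) \<delta>"
  have \<delta>: "\<delta> > 0" "\<delta> \<le> 1/2" using d by (auto simp: \<delta>_def)
  have PU: "\<theta> x = x * c x \<and> c x \<ge> 1/2 \<and> c x \<le> 3/2 \<and> \<bar>x\<bar> \<le> 1/2" if "x \<in> U" for x
    using d(2)[of x] that by (auto simp: U_def \<delta>_def dist_real_def abs_if split: if_splits)
  define \<sigma> where "\<sigma> = (\<lambda>y. (\<theta> y) ^ 4)"
  have sig: "\<bar>\<sigma> x\<bar> \<le> \<bar>x\<bar>" if "x \<in> U" for x
  proof -
    from PU[OF that] have h: "\<theta> x = x * c x" "c x \<ge> 1/2" "c x \<le> 3/2" "\<bar>x\<bar> \<le> 1/2" by auto
    have "\<bar>\<sigma> x\<bar> = \<bar>x\<bar>^4 * \<bar>c x\<bar>^4" by (simp add: \<sigma>_def h power_mult_distrib abs_mult)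
    also have "\<dots> \<le> \<bar>x\<bar>^4 * (3/2)^4"
      using h by (intro mult_left_mono power_mono) auto
    also have "\<dots> = \<bar>x\<bar> * (\<bar>x\<bar>^3 * (3/2)^4)" by (simp add: power_def)
    also have "\<dots> \<le> \<bar>x\<bar> * 1"
    proof (rule mult_left_mono)
      have "\<bar>x\<bar>^3 \<le> (1/2)^3" using h by (intro power_mono) auto
      then have "\<bar>x\<bar>^3 * (3/2)^4 \<le> (1/2)^3 * ((3::real)/2)^4" by (rule mult_right_mono) simp
      also have "\<dots> \<le> 1" by (simp add: eval_nat_numeral)
      finally show "\<bar>x\<bar>^3 * (3/2)^4 \<le> (1::real)" .
    qed simp
    finally show ?thesis by simp
  qed
  have iterU: "(\<sigma> ^^ n) x \<in> U" if "x \<in> U" for n x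
  proof (induction n)
    case 0 then show ?case using that by simp
  next
    case (Suc n)
    then show ?case using sig[OF Suc] by (auto simp: U_def)
  qed
  define f where "f = (\<lambda>n x. ln (c ((\<sigma> ^^ n) x)) / 4 ^ n)"
  have lnb: "\<bar>ln y\<bar> \<le> 1" if "y \<ge> 1/2" "y \<le> 3/2" for y :: real
  proof -
    have a: "ln y \<le> y - 1" using that by (intro ln_le_minus_one) auto
    have b: "ln (1/2) \<le> ln y" using that by (subst ln_le_cancel_iff) auto
    have c: "ln (1/2::real) \<ge> -1" using ln_2_less_1 by (simp add: ln_div)
    show ?thesis unfolding abs_le_iff using a b c that by linarith
  qed
  have fb: "norm (f n x) \<le> (1/4)^n" if "x \<in> U" for n x
  proof -
    have "\<bar>ln (c ((\<sigma> ^^ n) x))\<bar> \<le> 1" using PU[OF iterU[OF that]] lnb by blast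
    then have "\<bar>ln (c ((\<sigma> ^^ n) x))\<bar> / 4^n \<le> 1 / 4^n" by (rule divide_right_mono) simp
    then show ?thesis by (simp add: f_def power_one_over)
  qed
  have sm: "summable (\<lambda>n. (1/4::real)^n)" by (rule summable_geometric) simp
  have UL: "uniform_limit U (\<lambda>N x. \<Sum>n<N. f n x) (\<lambda>x. \<Sum>n. f n x) sequentially"
    by (rule Weierstrass_m_test[OF fb sm])
  have SB: "(\<Sum>n<N. f n x) \<in> cball 0 2" if "x \<in> U" for N x
  proof -
    have "\<bar>\<Sum>n<N. f n x\<bar> \<le> (\<Sum>n<N. (1/4::real)^n)"
      by (rule order_trans[OF sum_abs sum_mono]) (use fb[OF that] in simp)
    also have "\<dots> \<le> (\<Sum>n. (1/4::real)^n)" using sm by (intro sum_le_suminf) auto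
    also have "\<dots> = 4/3" by (subst suminf_geometric) auto
    finally show ?thesis by (simp add: dist_real_def)
  qed
  have uc: "uniformly_continuous_on (cball (0::real) 2) (\<lambda>s. exp (s/2))"
    by (intro compact_uniformly_continuous continuous_intros) auto
  have UL2: "uniform_limit U (\<lambda>N x. exp ((\<Sum>n<N. f n x)/2)) (\<lambda>x. exp ((\<Sum>n. f n x)/2)) sequentially"
    by (rule uniform_limit_compose_uniformly_continuous_on[OF UL uc]) (use SB in auto)
  have eq: "(\<Prod>n<N. c (((\<lambda>y. (\<theta> y) ^ 4) ^^ n) x) powr (1 / 4 ^ n)) powr (1/2)
      = exp ((\<Sum>n<N. f n x)/2)" if "x \<in> U" for N x
  proof -
    have pos: "c ((\<sigma> ^^ n) x) > 0" for n using PU[OF iterU[OF that], of n] by linarith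
    have "(\<Prod>n<N. c ((\<sigma> ^^ n) x) powr (1 / 4 ^ n)) = (\<Prod>n<N. exp (f n x))"
      using pos by (intro prod.cong refl) (simp add: powr_def f_def less_imp_neq[OF pos, symmetric])
    also have "\<dots> = exp (\<Sum>n<N. f n x)" by (simp add: exp_sum)
    finally show ?thesis by (simp add: \<sigma>_def powr_def)
  qed
  show ?thesis
  proof (intro exI conjI)
    show "open U" "0 \<in> U" using \<delta> by (auto simp: U_def)
    show "uniform_limit U
             (\<lambda>N x. (\<Prod>n<N. c (((\<lambda>y. (\<theta> y) ^ 4) ^^ n) x) powr (1 / 4 ^ n)) powr (1/2))
             (\<lambda>x. exp ((\<Sum>n. f n x)/2)) sequentially"
      using UL2 by (subst uniform_limit_cong'[OF eq refl]) auto
  qed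
qed

end
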